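(* Let $R$ be any difference ring and $F,G\subseteq R$. Then $\langle F\rangle_r\cap\langle G\rangle_r=\langle FG\rangle_r$, where $FG=\{fg:f\in F,g\in G\}$. Consequently, if $I$ and $J$ are $\sigma$-ideals of $R$, then $\langle I\rangle_r\cap\langle J\rangle_r=\langle I\cap J\rangle_r=\langle IJ\rangle_r$.
   Context: A difference ring is a commutative unital ring $R$ with a ring endomorphism $\sigma$. A $\sigma$-ideal is an ideal $I$ with $\sigma(I)\subseteq I$; it is well-mixed if $ab\in I$ implies $a\sigma(b)\in I$. $\langle F\rangle_r$ denotes the smallest radical well-mixed $\sigma$-ideal of $R$ containing $F$. *)

theory Defs
  imports Main
begin

text \<open>A difference ring: a commutative unital ring (type class comm_ring_1)
  together with a ring endomorphism sigma.\<close>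
definition ring_endo :: "('a::comm_ring_1 \<Rightarrow> 'a) \<Rightarrow> bool" where
  "ring_endo \<sigma> \<longleftrightarrow> (\<forall>a b. \<sigma> (a + b) = \<sigma> a + \<sigma> b) \<and>
                     (\<forall>a b. \<sigma> (a * b) = \<sigma> a * \<sigma> b) \<and> \<sigma> 1 = 1"

definition is_ideal :: "'a::comm_ring_1 set \<Rightarrow> bool" where
  "is_ideal I \<longleftrightarrow> 0 \<in> I \<and> (\<forall>a\<in>I. \<forall>b\<in>I. a + b \<in> I) \<and> (\<forall>r a. a \<in> I \<longrightarrow> r * a \<in> I)"

definition sigma_ideal :: "('a::comm_ring_1 \<Rightarrow> 'a) \<Rightarrow> 'a set \<Rightarrow> bool" where
  "sigma_ideal \<sigma> I \<longleftrightarrow> is_ideal I \<and> \<sigma> ` I \<subseteq> I"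

definition well_mixed :: "('a::comm_ring_1 \<Rightarrow> 'a) \<Rightarrow> 'a set \<Rightarrow> bool" where
  "well_mixed \<sigma> I \<longleftrightarrow> (\<forall>a b. a * b \<in> I \<longrightarrow> a * \<sigma> b \<in> I)"

definition radical_ideal :: "'a::comm_ring_1 set \<Rightarrow> bool" where
  "radical_ideal I \<longleftrightarrow> (\<forall>a (n::nat). a ^ n \<in> I \<longrightarrow> a \<in> I)"

definition rwm_sigma_ideal :: "('a::comm_ring_1 \<Rightarrow> 'a) \<Rightarrow> 'a set \<Rightarrow> bool" where
  "rwm_sigma_ideal \<sigma> I \<longleftrightarrow> sigma_ideal \<sigma> I \<and> well_mixed \<sigma> I \<and> radical_ideal I"

definition rwm_closure :: "('a::comm_ring_1 \<Rightarrow> 'a) \<Rightarrow> 'a set \<Rightarrow> 'a set" where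
  "rwm_closure \<sigma> F = \<Inter> {I. rwm_sigma_ideal \<sigma> I \<and> F \<subseteq> I}"

definition set_prod :: "'a::comm_ring_1 set \<Rightarrow> 'a set \<Rightarrow> 'a set" where
  "set_prod F G = {f * g | f g. f \<in> F \<and> g \<in> G}"

end

theory Submission
  imports Defs
begin

lemma rwm_Inter:
  assumes "\<forall>I\<in>S. rwm_sigma_ideal \<sigma> I"
  shows "rwm_sigma_ideal \<sigma> (\<Inter> S)"
proof -
  have a: "\<And>I. I \<in> S \<Longrightarrow> is_ideal I \<and> \<sigma> ` I \<subseteq> I \<and> well_mixed \<sigma> I \<and> radical_ideal I"
    using assms unfolding rwm_sigma_ideal_def sigma_ideal_def by blast
  have "is_ideal (\<Inter> S)" unfolding is_ideal_def
  proof (intro conjI ballI allI impI)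
    show "0 \<in> \<Inter> S" using a unfolding is_ideal_def by blast
  next
    fix x y assume "x \<in> \<Inter> S" "y \<in> \<Inter> S"
    then show "x + y \<in> \<Inter> S" using a unfolding is_ideal_def by blast
  next
    fix r x assume "x \<in> \<Inter> S"
    then show "r * x \<in> \<Inter> S" using a unfolding is_ideal_def by blast
  qed
  moreover have "\<sigma> ` \<Inter> S \<subseteq> \<Inter> S" using a by blast
  moreover have "well_mixed \<sigma> (\<Inter> S)" using a unfolding well_mixed_def by blast
  moreover have "radical_ideal (\<Inter> S)" using a unfolding radical_ideal_def by blast
  ultimately show ?thesis unfolding rwm_sigma_ideal_def sigma_ideal_def by blast
qed

lemma closure_rwm: "rwm_sigma_ideal \<sigma> (rwm_closure \<sigma> F)"
  unfolding rwm_closure_def by (rule rwm_Inter) blast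

lemma closure_sup: "F \<subseteq> rwm_closure \<sigma> F"
  unfolding rwm_closure_def by blast

lemma closure_min: "rwm_sigma_ideal \<sigma> K \<Longrightarrow> F \<subseteq> K \<Longrightarrow> rwm_closure \<sigma> F \<subseteq> K"
  unfolding rwm_closure_def by blast

lemma closure_mono: "F \<subseteq> G \<Longrightarrow> rwm_closure \<sigma> F \<subseteq> rwm_closure \<sigma> G"
  using closure_min[OF closure_rwm] closure_sup by blast

lemma quot_rwm:
  assumes K: "rwm_sigma_ideal \<sigma> K"
  shows "rwm_sigma_ideal \<sigma> {x. x * a \<in> K}"
proof -
  have id: "is_ideal K" and wm: "well_mixed \<sigma> K" and rad: "radical_ideal K"
    using K unfolding rwm_sigma_ideal_def sigma_ideal_def by auto
  have z: "0 \<in> K" and add: "\<And>u v. u \<in> K \<Longrightarrow> v \<in> K \<Longrightarrow> u + v \<in> K"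
    and mul: "\<And>r u. u \<in> K \<Longrightarrow> r * u \<in> K" using id unfolding is_ideal_def by auto
  have w: "\<And>u v. u * v \<in> K \<Longrightarrow> u * \<sigma> v \<in> K" using wm unfolding well_mixed_def by auto
  have r: "\<And>u n. u ^ n \<in> K \<Longrightarrow> u \<in> K" using rad unfolding radical_ideal_def by auto
  have "is_ideal {x. x * a \<in> K}"
    unfolding is_ideal_def
  proof (intro conjI ballI allI impI)
    show "0 \<in> {x. x * a \<in> K}" using z by simp
  next
    fix u v assume "u \<in> {x. x * a \<in> K}" "v \<in> {x. x * a \<in> K}"
    then show "u + v \<in> {x. x * a \<in> K}" using add by (simp add: distrib_right)
  next
    fix r u assume "u \<in> {x. x * a \<in> K}"
    then show "r * u \<in> {x. x * a \<in> K}" using mul[of "u*a" r] by (simp add: mult.assoc)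
  qed
  moreover have "\<sigma> ` {x. x * a \<in> K} \<subseteq> {x. x * a \<in> K}"
  proof
    fix y assume "y \<in> \<sigma> ` {x. x * a \<in> K}"
    then obtain x where "x * a \<in> K" "y = \<sigma> x" by auto
    then have "a * x \<in> K" by (simp add: mult.commute)
    then have "a * \<sigma> x \<in> K" by (rule w)
    then show "y \<in> {x. x * a \<in> K}" using \<open>y = \<sigma> x\<close> by (simp add: mult.commute)
  qed
  moreover have "well_mixed \<sigma> {x. x * a \<in> K}"
    unfolding well_mixed_def
  proof (intro allI impI)
    fix u v assume "u * v \<in> {x. x * a \<in> K}"
    then have "(u * a) * v \<in> K" by (simp add: ac_simps)
    then have "(u * a) * \<sigma> v \<in> K" by (rule w)
    then show "u * \<sigma> v \<in> {x. x * a \<in> K}" by (simp add: ac_simps)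
  qed
  moreover have "radical_ideal {x. x * a \<in> K}"
    unfolding radical_ideal_def
  proof (intro allI impI)
    fix u and n :: nat assume h: "u ^ n \<in> {x. x * a \<in> K}"
    then have "u ^ n * a \<in> K" by simp
    then have "(a ^ n * u) * (u ^ n * a) \<in> K" by (rule mul)
    moreover have "(a ^ n * u) * (u ^ n * a) = (u * a) ^ Suc n" by (simp add: power_mult_distrib ac_simps)
    ultimately have "(u * a) ^ Suc n \<in> K" by simp
    then show "u \<in> {x. x * a \<in> K}" using r by blast
  qed
  ultimately show ?thesis unfolding rwm_sigma_ideal_def sigma_ideal_def by blast
qed

lemma main_eq: "rwm_closure \<sigma> F \<inter> rwm_closure \<sigma> G = rwm_closure \<sigma> (set_prod F G)"
proof
  let ?K = "rwm_closure \<sigma> (set_prod F G)"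
  have K: "rwm_sigma_ideal \<sigma> ?K" by (rule closure_rwm)
  have FG: "f * g \<in> ?K" if "f \<in> F" "g \<in> G" for f g
    using closure_sup[of "set_prod F G" \<sigma>] that unfolding set_prod_def by blast
  have A: "x * g \<in> ?K" if "x \<in> rwm_closure \<sigma> F" "g \<in> G" for x g
  proof -
    have "F \<subseteq> {x. x * g \<in> ?K}" using FG that(2) by blast
    then have "rwm_closure \<sigma> F \<subseteq> {x. x * g \<in> ?K}" by (rule closure_min[OF quot_rwm[OF K]])
    then show ?thesis using that(1) by blast
  qed
  have B: "y * x \<in> ?K" if "x \<in> rwm_closure \<sigma> F" "y \<in> rwm_closure \<sigma> G" for x y
  proof -
    have "G \<subseteq> {y. y * x \<in> ?K}" using A[OF that(1)] by (auto simp: mult.commute)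
    then have "rwm_closure \<sigma> G \<subseteq> {y. y * x \<in> ?K}" by (rule closure_min[OF quot_rwm[OF K]])
    then show ?thesis using that(2) by blast
  qed
  show "rwm_closure \<sigma> F \<inter> rwm_closure \<sigma> G \<subseteq> ?K"
  proof
    fix y assume "y \<in> rwm_closure \<sigma> F \<inter> rwm_closure \<sigma> G"
    then have "y * y \<in> ?K" using B by blast
    then have "y ^ 2 \<in> ?K" by (simp add: power2_eq_square)
    then show "y \<in> ?K" using K unfolding rwm_sigma_ideal_def radical_ideal_def by blast
  qed
next
  have sub: "set_prod F G \<subseteq> rwm_closure \<sigma> F \<inter> rwm_closure \<sigma> G"
  proof
    fix z assume "z \<in> set_prod F G"
    then obtain f g where z: "z = f * g" "f \<in> F" "g \<in> G" unfolding set_prod_def by blast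
    have iF: "is_ideal (rwm_closure \<sigma> F)" and iG: "is_ideal (rwm_closure \<sigma> G)"
      using closure_rwm unfolding rwm_sigma_ideal_def sigma_ideal_def by blast+
    have "g * f \<in> rwm_closure \<sigma> F" using iF closure_sup z unfolding is_ideal_def by blast
    moreover have "f * g \<in> rwm_closure \<sigma> G" using iG closure_sup z unfolding is_ideal_def by blast
    ultimately show "z \<in> rwm_closure \<sigma> F \<inter> rwm_closure \<sigma> G" using z by (simp add: mult.commute)
  qed
  have "rwm_sigma_ideal \<sigma> (rwm_closure \<sigma> F \<inter> rwm_closure \<sigma> G)"
    using rwm_Inter[of "{rwm_closure \<sigma> F, rwm_closure \<sigma> G}" \<sigma>] closure_rwm by (metis Inter_insert Inter_empty inf_top.right_neutral insertE empty_iff)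
  then show "rwm_closure \<sigma> (set_prod F G) \<subseteq> rwm_closure \<sigma> F \<inter> rwm_closure \<sigma> G"
    using closure_min sub by blast
qed

theorem proposition5p2:
  fixes \<sigma> :: "'a::comm_ring_1 \<Rightarrow> 'a"
  assumes "ring_endo \<sigma>"
  shows "(\<forall>F G. rwm_closure \<sigma> F \<inter> rwm_closure \<sigma> G = rwm_closure \<sigma> (set_prod F G)) \<and>
         (\<forall>I J. sigma_ideal \<sigma> I \<and> sigma_ideal \<sigma> J \<longrightarrow>
             rwm_closure \<sigma> I \<inter> rwm_closure \<sigma> J = rwm_closure \<sigma> (I \<inter> J) \<and>
             rwm_closure \<sigma> (I \<inter> J) = rwm_closure \<sigma> (set_prod I J))"
proof (intro conjI allI impI)
  fix F G show "rwm_closure \<sigma> F \<inter> rwm_closure \<sigma> G = rwm_closure \<sigma> (set_prod F G)" by (rule main_eq)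
next
  fix I J :: "'a set" assume h: "sigma_ideal \<sigma> I \<and> sigma_ideal \<sigma> J"
  have iI: "is_ideal I" and iJ: "is_ideal J" using h unfolding sigma_ideal_def by auto
  have p: "set_prod I J \<subseteq> I \<inter> J"
  proof
    fix z assume "z \<in> set_prod I J"
    then obtain f g where z: "z = f * g" "f \<in> I" "g \<in> J" unfolding set_prod_def by blast
    have "g * f \<in> I" using iI z unfolding is_ideal_def by blast
    moreover have "f * g \<in> J" using iJ z unfolding is_ideal_def by blast
    ultimately show "z \<in> I \<inter> J" using z by (simp add: mult.commute)
  qed
  have q: "I \<inter> J \<subseteq> rwm_closure \<sigma> (set_prod I J)"
    using main_eq[of \<sigma> I J] closure_sup[of I \<sigma>] closure_sup[of J \<sigma>] by blast
  have e: "rwm_closure \<sigma> (I \<inter> J) = rwm_closure \<sigma> (set_prod I J)"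
    using closure_mono[OF p] closure_min[OF closure_rwm q] by blast
  then show "rwm_closure \<sigma> (I \<inter> J) = rwm_closure \<sigma> (set_prod I J)" .
  show "rwm_closure \<sigma> I \<inter> rwm_closure \<sigma> J = rwm_closure \<sigma> (I \<inter> J)"
    using e main_eq by metis
qed

end
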